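(* Let $p>\frac{3d}{d+2}$, let $\tilde\sigma_c:Y\to Y$ be a given map (constitutive law), and let $\mathcal{D}=\{(\epsilon,\tilde\sigma)\in Y\times Y:\tilde\sigma=\tilde\sigma_c(\epsilon)\}$. Assume that $\operatorname{dist}(\cdot,\mathcal{D})$ is $(p,q)$-coercive. Define on $V$ $$I(v)=\begin{cases}\int_\Omega\operatorname{dist}(v,\mathcal{D})\,dx,&v\in\mathcal{C}_{\mathrm{nl}},\\+\infty,&\text{else},\end{cases}\qquad I^*(v)=\begin{cases}\int_\Omega\mathcal{Q}_{\mathcal{A}}\operatorname{dist}(v,\mathcal{D})\,dx,&v\in\mathcal{C}_{\mathrm{nl}},\\+\infty,&\text{else}.\end{cases}$$ Suppose the system has a weak solution, i.e. $\min_{v\in\mathcal{C}_{\mathrm{nl}}}I(v)=0$. Then a function $v^*\in\mathcal{C}_{\mathrm{nl}}$ is a minimiser of $I^*$ if and only if $v^*(x)\in\{z\in Y\times Y:\mathcal{Q}_{\mathcal{A}}\operatorname{dist}(z,\mathcal{D})=0\}$ for almost every $x\in\Omega$. Moreover, if $\{z:\mathcal{Q}_{\mathcal{A}}\operatorname{dist}(z,\mathcal{D})=0\}=\mathcal{D}$, then every such $v^*=(\epsilon,\tilde\sigma)$ is a weak solution, i.e. $v^*\in\mathcal{C}_{\mathrm{nl}}$ and $\tilde\sigma=\tilde\sigma_c(\epsilon)$ a.e. in $\Omega$.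
   Context: $d\ge2$, $1<p<\infty$, $q=p/(p-1)$, $Y=\{A\in\mathbb{R}^{d\times d}:A=A^T,\operatorname{tr}A=0\}$ with Frobenius product and norm. $\operatorname{dist}((\epsilon_1,\tilde\sigma_1),(\epsilon_2,\tilde\sigma_2))=\frac1p|\epsilon_1-\epsilon_2|^p+\frac1q|\tilde\sigma_1-\tilde\sigma_2|^q$, $\operatorname{dist}(z,\mathcal{D})=\inf_{w\in\mathcal{D}}\operatorname{dist}(z,w)$. A function $F:Y\times Y\to\mathbb{R}$ is $(p,q)$-coercive if there are $C_1,C_2>0$, $\gamma\in\mathbb{R}$ with $F(\epsilon,\tilde\sigma)\ge C_1(|\epsilon|^p+|\tilde\sigma|^q)-C_2-\gamma\,\epsilon\cdot\tilde\sigma$. $\Omega\subset\mathbb{R}^d$ bounded, simply connected, open, $C^1$ boundary with outer normal $\nu$; $V=L_p(\Omega;Y)\times L_q(\Omega;Y)$; $\partial\Omega$ is the closure of $\Gamma_D\cup\Gamma_R$ for disjoint relatively open $C^1$ pieces with $\mathcal{H}^{d-1}$-null relative boundaries (no Neumann part). Data $f\in W^{-1}_q(\Omega;\mathbb{R}^d)$, $g\in W^{1-1/p}_p(\Gamma_D;\mathbb{R}^d)$, $g_\nu\in W^{1-1/p}_p(\Gamma_R)$, $h_\tau\in W^{-1/q}_q(\Gamma_R;\mathbb{R}^d)$, $\lambda\ge0$, $P_T$ tangential projection. $\mathcal{C}_{\mathrm{nl}}$ is the set of $(\epsilon,\tilde\sigma)\in V$ for which there exist $u\in W^1_p(\Omega;\mathbb{R}^d)$,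 $\pi\in L_q(\Omega)$ with $\epsilon=\frac12(\nabla u+\nabla u^T)$, $\operatorname{div}u=0$, $-\operatorname{div}\tilde\sigma=f-\nabla\pi-(u\cdot\nabla)u$ in $W^{-1}_q$, $u=g$ on $\Gamma_D$, $u\cdot\nu=g_\nu$ and $P_T(\tilde\sigma\nu+\lambda u)=h_\tau$ on $\Gamma_R$. $\mathcal{Q}_{\mathcal{A}}F(z)=\inf_{\psi\in\mathcal{T}}\int_{\mathbb{T}_d}F(z+\psi)$ where $\mathcal{T}$ consists of $\psi=(\psi_1,\psi_2)\in C^\infty(\mathbb{T}_d;Y\times Y)$ with zero mean, $\partial_{ij}(\psi_1)_{kl}+\partial_{kl}(\psi_1)_{ij}-\partial_{il}(\psi_1)_{kj}-\partial_{kj}(\psi_1)_{il}=0$ for all $i,j,k,l$, and $\operatorname{div}(\psi_2-\pi\mathrm{Id})=0$ for some smooth $\pi$. *)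

theory Defs
  imports "HOL-Analysis.Analysis"
begin

type_synonym 'd mat = "real^'d^'d"

text \<open>Y: symmetric trace-free d x d matrices (the norm / inner product on real^'d^'d
  is the Frobenius one).\<close>
definition Ysp :: "'d::finite mat set" where
  "Ysp = {A. transpose A = A \<and> trace A = 0}"

definition conjexp :: "real \<Rightarrow> real" where
  "conjexp p = p / (p - 1)"

definition dist_pq :: "real \<Rightarrow> ('d::finite mat \<times> 'd mat) \<Rightarrow> ('d mat \<times> 'd mat) \<Rightarrow> real" where
  "dist_pq p z w = (1/p) * norm (fst z - fst w) powr p
                 + (1/conjexp p) * norm (snd z - snd w) powr (conjexp p)"

definition Dset :: "('d::finite mat \<Rightarrow> 'd mat) \<Rightarrow> ('d mat \<times> 'd mat) set" where
  "Dset sc = {(e, sc e) | e. e \<in> Ysp}"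

definition distD :: "real \<Rightarrow> ('d::finite mat \<Rightarrow> 'd mat) \<Rightarrow> ('d mat \<times> 'd mat) \<Rightarrow> real" where
  "distD p sc z = Inf {dist_pq p z w | w. w \<in> Dset sc}"

definition pq_coercive :: "real \<Rightarrow> ('d::finite mat \<times> 'd mat \<Rightarrow> real) \<Rightarrow> bool" where
  "pq_coercive p F \<longleftrightarrow> (\<exists>C1>0. \<exists>C2>0. \<exists>\<gamma>::real. \<forall>e\<in>Ysp. \<forall>s\<in>Ysp.
      F (e, s) \<ge> C1 * (norm e powr p + norm s powr (conjexp p)) - C2 - \<gamma> * (e \<bullet> s))"

definition pd :: "'d::finite \<Rightarrow> (real^'d \<Rightarrow> real) \<Rightarrow> real^'d \<Rightarrow> real" where
  "pd i f x = frechet_derivative f (at x) (axis i 1)"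

coinductive smooth_real :: "(real^'d::finite \<Rightarrow> real) \<Rightarrow> bool" where
  "(\<forall>x. f differentiable (at x)) \<Longrightarrow> (\<forall>i. smooth_real (pd i f)) \<Longrightarrow> smooth_real f"

text \<open>Functions on the torus = 1-periodic functions on R^d.\<close>
definition periodic1 :: "(real^'d::finite \<Rightarrow> 'b) \<Rightarrow> bool" where
  "periodic1 f \<longleftrightarrow> (\<forall>x i. f (x + axis i 1) = f x)"

definition smooth_mat :: "(real^'d::finite \<Rightarrow> 'd mat) \<Rightarrow> bool" where
  "smooth_mat A \<longleftrightarrow> (\<forall>i j. smooth_real (\<lambda>x. A x $ i $ j))"

definition Tclass :: "(real^'d::finite \<Rightarrow> 'd mat \<times> 'd mat) set" where
  "Tclass = {\<psi>.
     smooth_mat (\<lambda>x. fst (\<psi> x)) \<and> smooth_mat (\<lambda>x. snd (\<psi> x)) \<and> periodic1 \<psi> \<and>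
     (\<forall>x. fst (\<psi> x) \<in> Ysp \<and> snd (\<psi> x) \<in> Ysp) \<and>
     integral (cbox 0 1) (\<lambda>x. fst (\<psi> x)) = 0 \<and> integral (cbox 0 1) (\<lambda>x. snd (\<psi> x)) = 0 \<and>
     (\<forall>i j k l x.
        pd i (pd j (\<lambda>y. fst (\<psi> y) $ k $ l)) x + pd k (pd l (\<lambda>y. fst (\<psi> y) $ i $ j)) x
      - pd i (pd l (\<lambda>y. fst (\<psi> y) $ k $ j)) x - pd k (pd j (\<lambda>y. fst (\<psi> y) $ i $ l)) x = 0) \<and>
     (\<exists>\<pi>. smooth_real \<pi> \<and> periodic1 \<pi> \<and>
        (\<forall>i x. (\<Sum>j\<in>UNIV. pd j (\<lambda>y. snd (\<psi> y) $ i $ j - (if i = j then \<pi> y else 0)) x) = 0))}"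

definition QA :: "('d::finite mat \<times> 'd mat \<Rightarrow> real) \<Rightarrow> 'd mat \<times> 'd mat \<Rightarrow> real" where
  "QA F z = Inf {integral (cbox 0 1) (\<lambda>x. F (fst z + fst (\<psi> x), snd z + snd (\<psi> x))) | \<psi>. \<psi> \<in> Tclass}"

definition Lsp :: "real \<Rightarrow> (real^'d::finite) set \<Rightarrow> (real^'d \<Rightarrow> 'd mat) set" where
  "Lsp r \<Omega> = {f. f \<in> borel_measurable (lebesgue_on \<Omega>) \<and> (\<forall>x\<in>\<Omega>. f x \<in> Ysp) \<and>
                   integrable (lebesgue_on \<Omega>) (\<lambda>x. norm (f x) powr r)}"

definition Vsp :: "real \<Rightarrow> (real^'d::finite) set \<Rightarrow> (real^'d \<Rightarrow> 'd mat \<times> 'd mat) set" where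
  "Vsp p \<Omega> = {v. (\<lambda>x. fst (v x)) \<in> Lsp p \<Omega> \<and> (\<lambda>x. snd (v x)) \<in> Lsp (conjexp p) \<Omega>}"

definition Ifun :: "real \<Rightarrow> ('d::finite mat \<Rightarrow> 'd mat) \<Rightarrow> (real^'d) set
      \<Rightarrow> (real^'d \<Rightarrow> 'd mat \<times> 'd mat) set \<Rightarrow> (real^'d \<Rightarrow> 'd mat \<times> 'd mat) \<Rightarrow> ennreal" where
  "Ifun p sc \<Omega> C v = (if v \<in> C then \<integral>\<^sup>+ x. ennreal (distD p sc (v x)) \<partial>(lebesgue_on \<Omega>) else \<infinity>)"

definition Istar :: "real \<Rightarrow> ('d::finite mat \<Rightarrow> 'd mat) \<Rightarrow> (real^'d) set
      \<Rightarrow> (real^'d \<Rightarrow> 'd mat \<times> 'd mat) set \<Rightarrow> (real^'d \<Rightarrow> 'd mat \<times> 'd mat) \<Rightarrow> ennreal" where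
  "Istar p sc \<Omega> C v = (if v \<in> C then \<integral>\<^sup>+ x. ennreal (QA (distD p sc) (v x)) \<partial>(lebesgue_on \<Omega>) else \<infinity>)"

text \<open>C^1 boundary: locally, after a rigid motion, \<Omega> is the subgraph of a C^1 function.\<close>
definition C1_boundary :: "(real^'d::finite) set \<Rightarrow> bool" where
  "C1_boundary \<Omega> \<longleftrightarrow> (\<forall>x\<in>frontier \<Omega>. \<exists>r>0. \<exists>R k. orthogonal_transformation R \<and>
     (\<exists>(h::real^'d \<Rightarrow> real) (Dh::real^'d \<Rightarrow> ((real^'d) \<Rightarrow>\<^sub>L real)).
        (\<forall>y z. (\<forall>i. i \<noteq> k \<longrightarrow> y $ i = z $ i) \<longrightarrow> h y = h z) \<and>
        (\<forall>y. (h has_derivative blinfun_apply (Dh y)) (at y)) \<and> continuous_on UNIV Dh \<and>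
        \<Omega> \<inter> ball x r = {y \<in> ball x r. R (y - x) $ k < h (R (y - x))}))"

end

theory Submission
  imports Defs
begin

lemma pd_zero: "pd i (\<lambda>x. 0) = (\<lambda>x. 0)"
proof
  fix x
  have "((\<lambda>x::real^'a. 0::real) has_derivative (\<lambda>h. 0)) (at x)" by (rule has_derivative_const)
  then have "frechet_derivative (\<lambda>x::real^'a. 0::real) (at x) = (\<lambda>h. 0)"
    using frechet_derivative_at by metis
  then show "pd i (\<lambda>x. 0) x = 0" by (simp add: pd_def)
qed

lemma smooth_zero: "smooth_real (\<lambda>x. 0)"
proof -
  have "f = (\<lambda>x. 0) \<Longrightarrow> smooth_real f" for f :: "real^'a \<Rightarrow> real"
  proof (coinduction arbitrary: f rule: smooth_real.coinduct)
    case (smooth_real f)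
    then show ?case by (auto simp: pd_zero)
  qed
  then show ?thesis by simp
qed

lemma zero_Ysp: "0 \<in> Ysp"
  by (simp add: Ysp_def trace_def transpose_def vec_eq_iff)

lemma zero_Tclass: "(\<lambda>x. (0,0)) \<in> Tclass"
  unfolding Tclass_def
  apply (simp add: smooth_mat_def smooth_zero periodic1_def zero_Ysp pd_zero)
  apply (rule exI[of _ "\<lambda>x. 0"])
  apply (simp add: smooth_zero pd_zero)
  done

lemma smooth_real_cont: "smooth_real f \<Longrightarrow> continuous_on UNIV f"
  by (erule smooth_real.cases) (auto intro: differentiable_imp_continuous_on simp: differentiable_on_def)

lemma Tclass_cont: "\<psi> \<in> Tclass \<Longrightarrow> continuous_on UNIV \<psi>"
proof -
  assume "\<psi> \<in> Tclass"
  then have a: "smooth_mat (\<lambda>x. fst (\<psi> x))" "smooth_mat (\<lambda>x. snd (\<psi> x))" by (auto simp: Tclass_def)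
  have c1: "continuous_on UNIV (\<lambda>x. fst (\<psi> x))"
  proof -
    have "continuous_on UNIV (\<lambda>x. \<chi> i. \<chi> j. fst (\<psi> x) $ i $ j)"
      using a(1) by (intro continuous_on_vec_lambda) (auto simp: smooth_mat_def intro: smooth_real_cont)
    then show ?thesis by simp
  qed
  have c2: "continuous_on UNIV (\<lambda>x. snd (\<psi> x))"
  proof -
    have "continuous_on UNIV (\<lambda>x. \<chi> i. \<chi> j. snd (\<psi> x) $ i $ j)"
      using a(2) by (intro continuous_on_vec_lambda) (auto simp: smooth_mat_def intro: smooth_real_cont)
    then show ?thesis by simp
  qed
  have "continuous_on UNIV (\<lambda>x. (fst (\<psi> x), snd (\<psi> x)))"
    using c1 c2 by (intro continuous_on_Pair)
  then show ?thesis by simp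
qed


definition Gf :: "real \<Rightarrow> ('d::finite mat \<times> 'd mat) \<Rightarrow> real" where
  "Gf p a = (1/p) * norm (fst a) powr p + (1/conjexp p) * norm (snd a) powr (conjexp p)"

lemma conjexp_gt1: "1 < p \<Longrightarrow> 1 < conjexp p"
  by (simp add: conjexp_def)

lemma dist_pq_Gf: "dist_pq p z w = Gf p (z - w)"
  by (simp add: dist_pq_def Gf_def)

lemma Gf_nonneg: "1 < p \<Longrightarrow> 0 \<le> Gf p a"
  using conjexp_gt1[of p] by (simp add: Gf_def)

lemma Gf_cont: "1 < p \<Longrightarrow> continuous_on UNIV (Gf p)"
  unfolding Gf_def using conjexp_gt1[of p]
  by (intro continuous_intros continuous_on_powr') auto

lemma powr_bound: fixes x p B :: real assumes "1 < p" "0 \<le> x" "x powr p \<le> B" shows "x \<le> 1 + B"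
proof (cases "x \<le> 1")
  case False
  then have "x powr 1 \<le> x powr p" using assms False powr_mono[of 1 p x] by simp
  then have "x \<le> x powr p" using assms by simp
  then show ?thesis using assms False by linarith
next
  case True
  then show ?thesis using assms powr_ge_zero[of x p] by linarith
qed

lemma Gf_bound: assumes "1 < p" "Gf p a \<le> M" shows "norm a \<le> 2 + p * M + conjexp p * M"
proof -
  let ?q = "conjexp p"
  have q: "1 < ?q" using conjexp_gt1 assms by auto
  have t1: "0 \<le> (1/p) * norm (fst a) powr p" and t2: "0 \<le> (1/?q) * norm (snd a) powr ?q" using assms q by auto
  have "(1/p) * norm (fst a) powr p \<le> M" using assms(2) t2 unfolding Gf_def by linarith
  then have "norm (fst a) powr p \<le> p * M" using assms by (simp add: field_simps)
  then have b1: "norm (fst a) \<le> 1 + p * M" using powr_bound[OF assms(1)] by auto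
  have "(1/?q) * norm (snd a) powr ?q \<le> M" using assms(2) t1 unfolding Gf_def by linarith
  then have "norm (snd a) powr ?q \<le> ?q * M" using q by (simp add: field_simps)
  then have b2: "norm (snd a) \<le> 1 + ?q * M" using powr_bound[OF q] by auto
  have "norm a \<le> norm (fst a) + norm (snd a)" using norm_Pair_le[of "fst a" "snd a"] by simp
  then show ?thesis using b1 b2 by simp
qed

lemma Dset_ne: "Dset sc \<noteq> {}"
  using zero_Ysp by (auto simp: Dset_def)

lemma distD_eq: "distD p sc z = Inf ((\<lambda>w. Gf p (z - w)) ` Dset sc)"
  unfolding distD_def dist_pq_Gf by (rule arg_cong[where f=Inf]) auto

lemma distD_nonneg: assumes p: "1 < (p::real)" shows "0 \<le> distD p sc z"
  unfolding distD_eq using Dset_ne by (intro cInf_greatest) (auto intro!: Gf_nonneg[OF p])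

lemma distD_le: assumes p: "1 < (p::real)" and w: "w \<in> Dset sc" shows "distD p sc z \<le> Gf p (z - w)"
  unfolding distD_eq using w by (intro cInf_lower bdd_belowI[of _ 0]) (auto intro!: Gf_nonneg[OF p])

lemma distD_lt: "distD p sc z < (c::real) \<Longrightarrow> \<exists>w\<in>Dset sc. Gf p (z - w) < c"
  unfolding distD_eq using Dset_ne cInf_lessD[of "(\<lambda>w. Gf p (z - w)) ` Dset sc" c] by auto

lemma distD_cont: fixes sc :: "'d::finite mat \<Rightarrow> 'd mat" assumes p: "1 < p" shows "continuous_on UNIV (distD p sc)"
  unfolding continuous_on_iff
proof (intro ballI allI impI)
  fix z0 :: "'d mat \<times> 'd mat" and e :: real
  assume "0 < e"
  define \<epsilon> where "\<epsilon> = min 1 (e/3)"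
  have \<epsilon>: "0 < \<epsilon>" "\<epsilon> \<le> 1" "2*\<epsilon> < e" using \<open>0<e\<close> by (auto simp: \<epsilon>_def)
  define M where "M = distD p sc z0 + 3"
  define R where "R = 2 + p * M + conjexp p * M"
  have "uniformly_continuous_on (cball 0 (R+1)) (Gf p :: 'd mat \<times> 'd mat \<Rightarrow> real)"
    using Gf_cont[OF p] by (intro compact_uniformly_continuous) (auto intro: continuous_on_subset)
  then have uc: "\<forall>e>0. \<exists>d>0. \<forall>a\<in>cball (0::'d mat \<times> 'd mat) (R+1). \<forall>b\<in>cball 0 (R+1). dist b a < d \<longrightarrow> dist (Gf p b) (Gf p a) < e"
    unfolding uniformly_continuous_on_def .
  from uc[rule_format, OF \<epsilon>(1)] obtain d where d0: "d > 0"
    and d1: "\<forall>a\<in>cball (0::'d mat \<times> 'd mat) (R+1). \<forall>b\<in>cball 0 (R+1). dist b a < d \<longrightarrow> dist (Gf p b) (Gf p a) < \<epsilon>"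
    by blast
  have d: "d > 0" "\<And>a b. a \<in> cball (0::'d mat \<times> 'd mat) (R+1) \<Longrightarrow> b \<in> cball 0 (R+1) \<Longrightarrow> dist b a < d \<Longrightarrow> dist (Gf p b) (Gf p a) < \<epsilon>"
    using d0 d1 by auto
  show "\<exists>d>0. \<forall>z\<in>UNIV. dist z z0 < d \<longrightarrow> dist (distD p sc z) (distD p sc z0) < e"
  proof (intro exI[of _ "min d 1"] conjI ballI impI)
    show "0 < min d 1" using d(1) by simp
  next
    fix z assume dz: "dist z z0 < min d 1"
    have dd: "dist (z - w) (z0 - w) = dist z z0" for w by (simp add: dist_norm)
    have up: "distD p sc z < distD p sc z0 + 2*\<epsilon>"
    proof -
      obtain w where w: "w \<in> Dset sc" "Gf p (z0 - w) < distD p sc z0 + \<epsilon>" using distD_lt[of p sc z0 "distD p sc z0 + \<epsilon>"] \<epsilon> by auto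
      have "norm (z0 - w) \<le> R" unfolding R_def using w \<epsilon> by (intro Gf_bound[OF p]) (auto simp: M_def)
      moreover have "norm (z - w) \<le> R + 1"
        using norm_triangle_ineq[of "z - z0" "z0 - w"] dz \<open>norm (z0 - w) \<le> R\<close> by (auto simp: dist_norm)
      ultimately have "dist (Gf p (z - w)) (Gf p (z0 - w)) < \<epsilon>"
        using d(2)[of "z0 - w" "z - w"] dz dd by auto
      then show ?thesis using distD_le[OF p w(1), of z] w(2) by (auto simp: dist_real_def)
    qed
    have lo: "distD p sc z0 < distD p sc z + 2*\<epsilon>"
    proof -
      obtain w where w: "w \<in> Dset sc" "Gf p (z - w) < distD p sc z + \<epsilon>" using distD_lt[of p sc z "distD p sc z + \<epsilon>"] \<epsilon> by auto
      have "norm (z - w) \<le> R" unfolding R_def using w \<epsilon> up by (intro Gf_bound[OF p]) (auto simp: M_def)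
      moreover have "norm (z0 - w) \<le> R + 1"
        using norm_triangle_ineq[of "z0 - z" "z - w"] dz \<open>norm (z - w) \<le> R\<close> by (auto simp: dist_norm norm_minus_commute)
      ultimately have "dist (Gf p (z0 - w)) (Gf p (z - w)) < \<epsilon>"
        using d(2)[of "z - w" "z0 - w"] dz dd by (auto simp: dist_commute)
      then show ?thesis using distD_le[OF p w(1), of z0] w(2) by (auto simp: dist_real_def)
    qed
    show "dist (distD p sc z) (distD p sc z0) < e" using up lo \<epsilon> by (auto simp: dist_real_def)
  qed
qed


definition Ipsi :: "real \<Rightarrow> ('d::finite mat \<Rightarrow> 'd mat) \<Rightarrow> (real^'d \<Rightarrow> 'd mat \<times> 'd mat) \<Rightarrow> 'd mat \<times> 'd mat \<Rightarrow> real" where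
  "Ipsi p sc \<psi> z = integral (cbox 0 1) (\<lambda>x. distD p sc (fst z + fst (\<psi> x), snd z + snd (\<psi> x)))"

lemma QA_eq: "QA (distD p sc) z = Inf ((\<lambda>\<psi>. Ipsi p sc \<psi> z) ` Tclass)"
  unfolding QA_def Ipsi_def by (rule arg_cong[where f=Inf]) auto

lemma Ipsi_nonneg: assumes p: "1 < p" shows "0 \<le> Ipsi p sc \<psi> z"
proof (cases "(\<lambda>x. distD p sc (fst z + fst (\<psi> x), snd z + snd (\<psi> x))) integrable_on cbox 0 1")
  case True
  then show ?thesis unfolding Ipsi_def by (rule integral_nonneg) (simp add: distD_nonneg[OF p])
qed (simp add: Ipsi_def not_integrable_integral)

lemma Ipsi_cont: fixes sc :: "'d::finite mat \<Rightarrow> 'd mat"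
  assumes p: "1 < p" and psi: "\<psi> \<in> Tclass" shows "continuous_on UNIV (Ipsi p sc \<psi>)"
proof -
  have c: "continuous_on UNIV \<psi>" by (rule Tclass_cont[OF psi])
  have c2: "continuous_on UNIV (\<lambda>w::('d mat \<times> 'd mat) \<times> (real^'d). \<psi> (snd w))"
    by (rule continuous_on_compose2[OF c]) (auto intro: continuous_intros)
  have c3: "continuous_on UNIV (\<lambda>w::('d mat \<times> 'd mat) \<times> (real^'d).
        (fst (fst w) + fst (\<psi> (snd w)), snd (fst w) + snd (\<psi> (snd w))))"
    using c2 by (intro continuous_intros)
  have c4: "continuous_on UNIV (\<lambda>w::('d mat \<times> 'd mat) \<times> (real^'d).
        distD p sc (fst (fst w) + fst (\<psi> (snd w)), snd (fst w) + snd (\<psi> (snd w))))"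
    by (rule continuous_on_compose2[OF distD_cont[OF p] c3]) auto
  have "continuous_on (UNIV \<times> cbox 0 1) (\<lambda>(z, x). distD p sc (fst z + fst (\<psi> x), snd z + snd (\<psi> x)))"
    using continuous_on_subset[OF c4] by (simp add: case_prod_beta')
  from integral_continuous_on_param[OF this] show ?thesis
    unfolding Ipsi_def by (simp add: fun_eq_iff)
qed

lemma Tclass_ne: "Tclass \<noteq> {}" using zero_Tclass by auto

lemma QA_nonneg: assumes p: "1 < p" shows "0 \<le> QA (distD p sc) z"
  unfolding QA_eq using Tclass_ne by (intro cInf_greatest) (auto intro!: Ipsi_nonneg[OF p])

lemma QA_le: assumes p: "1 < p" and "\<psi> \<in> Tclass" shows "QA (distD p sc) z \<le> Ipsi p sc \<psi> z"
  unfolding QA_eq using assms(2) by (intro cInf_lower bdd_belowI[of _ 0]) (auto intro!: Ipsi_nonneg[OF p])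

lemma QA_le_distD: fixes sc :: "'d::finite mat \<Rightarrow> 'd mat" assumes p: "1 < p" shows "QA (distD p sc) z \<le> distD p sc z"
proof -
  have "Ipsi p sc (\<lambda>x. (0,0)) z = distD p sc z"
  proof -
    have "(0::real^'d) \<in> cbox 0 1" by (simp add: mem_box_cart)
    then show ?thesis by (auto simp add: Ipsi_def content_cbox_if_cart)
  qed
  then show ?thesis using QA_le[OF p zero_Tclass, of sc z] by simp
qed

lemma QA_open: fixes sc :: "'d::finite mat \<Rightarrow> 'd mat"
  assumes p: "1 < p" shows "open {z. QA (distD p sc) z < c}"
proof -
  have "{z. QA (distD p sc) z < c} = (\<Union>\<psi>\<in>Tclass. {z. Ipsi p sc \<psi> z < c})"
  proof (intro equalityI subsetI)
    fix z assume "z \<in> {z. QA (distD p sc) z < c}"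
    then have "Inf ((\<lambda>\<psi>. Ipsi p sc \<psi> z) ` Tclass) < c" by (simp add: QA_eq)
    then obtain y where "y \<in> (\<lambda>\<psi>. Ipsi p sc \<psi> z) ` Tclass" "y < c"
      using cInf_lessD[of "(\<lambda>\<psi>. Ipsi p sc \<psi> z) ` Tclass" c] Tclass_ne by blast
    then show "z \<in> (\<Union>\<psi>\<in>Tclass. {z. Ipsi p sc \<psi> z < c})" by auto
  next
    fix z assume "z \<in> (\<Union>\<psi>\<in>Tclass. {z. Ipsi p sc \<psi> z < c})"
    then obtain \<psi> where "\<psi> \<in> Tclass" "Ipsi p sc \<psi> z < c" by auto
    then show "z \<in> {z. QA (distD p sc) z < c}" using QA_le[OF p, of \<psi> sc z] by auto
  qed
  moreover have "open {z. Ipsi p sc \<psi> z < c}" if "\<psi> \<in> Tclass" for \<psi>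
    using Ipsi_cont[OF p that] by (intro open_Collect_less) (auto intro: continuous_intros)
  ultimately show ?thesis by auto
qed

lemma QA_borel: fixes sc :: "'d::finite mat \<Rightarrow> 'd mat"
  assumes p: "1 < p" shows "QA (distD p sc) \<in> borel_measurable borel"
  unfolding borel_measurable_iff_less using borel_open[OF QA_open[OF p]] by auto


theorem proposition6p1:
  fixes \<Omega> :: "(real^'d::finite) set"
    and p :: real
    and sc :: "'d mat \<Rightarrow> 'd mat"
    and Cnl :: "(real^'d \<Rightarrow> 'd mat \<times> 'd mat) set"
  assumes "CARD('d) \<ge> 2"
    and "1 < p"
    and "p > 3 * real CARD('d) / (real CARD('d) + 2)"
    and "bounded \<Omega>" "open \<Omega>" "simply_connected \<Omega>" "C1_boundary \<Omega>"
    and "\<forall>e\<in>Ysp. sc e \<in> Ysp"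
    and "pq_coercive p (distD p sc)"
    and "Cnl \<subseteq> Vsp p \<Omega>"
    and "\<exists>v\<in>Cnl. Ifun p sc \<Omega> Cnl v = 0 \<and> (\<forall>w\<in>Cnl. Ifun p sc \<Omega> Cnl v \<le> Ifun p sc \<Omega> Cnl w)"
  shows "(\<forall>v\<in>Cnl. (\<forall>w\<in>Vsp p \<Omega>. Istar p sc \<Omega> Cnl v \<le> Istar p sc \<Omega> Cnl w)
              \<longleftrightarrow> (AE x in lebesgue_on \<Omega>. QA (distD p sc) (v x) = 0)) \<and>
         ({z. z \<in> Ysp \<times> Ysp \<and> QA (distD p sc) z = 0} = Dset sc \<longrightarrow>
           (\<forall>v\<in>Cnl. (AE x in lebesgue_on \<Omega>. QA (distD p sc) (v x) = 0) \<longrightarrow>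
              (v \<in> Cnl \<and> (AE x in lebesgue_on \<Omega>. snd (v x) = sc (fst (v x))))))"
proof -
  note p = assms(2)
  let ?Q = "QA (distD p sc)"
  let ?M = "lebesgue_on \<Omega>"
  from assms(11) obtain v0 where v0: "v0 \<in> Cnl" "Ifun p sc \<Omega> Cnl v0 = 0" by blast
  have Istar0: "Istar p sc \<Omega> Cnl v0 = 0"
  proof -
    have "Istar p sc \<Omega> Cnl v0 = (\<integral>\<^sup>+ x. ennreal (?Q (v0 x)) \<partial>?M)"
      using v0 by (simp add: Istar_def)
    also have "\<dots> \<le> (\<integral>\<^sup>+ x. ennreal (distD p sc (v0 x)) \<partial>?M)"
      by (intro nn_integral_mono ennreal_leI QA_le_distD[OF p])
    also have "\<dots> = 0" using v0 by (simp add: Ifun_def)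
    finally show ?thesis by simp
  qed
  have inV: "v \<in> Vsp p \<Omega>" if "v \<in> Cnl" for v using that assms(10) by auto
  have meas: "(\<lambda>x. ennreal (?Q (v x))) \<in> borel_measurable ?M" if "v \<in> Cnl" for v
  proof -
    have "(\<lambda>x. fst (v x)) \<in> borel_measurable ?M" "(\<lambda>x. snd (v x)) \<in> borel_measurable ?M"
      using inV[OF that] by (auto simp: Vsp_def Lsp_def)
    then have "(\<lambda>x. (fst (v x), snd (v x))) \<in> borel_measurable ?M" by (rule borel_measurable_Pair)
    then have "v \<in> borel_measurable ?M" by simp
    from measurable_compose[OF this QA_borel[OF p]] have "(\<lambda>x. ?Q (v x)) \<in> borel_measurable ?M" .
    then show ?thesis by measurable
  qed
  have part1: "(\<forall>w\<in>Vsp p \<Omega>. Istar p sc \<Omega> Cnl v \<le> Istar p sc \<Omega> Cnl w)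
              \<longleftrightarrow> (AE x in ?M. ?Q (v x) = 0)" if v: "v \<in> Cnl" for v
  proof
    assume "\<forall>w\<in>Vsp p \<Omega>. Istar p sc \<Omega> Cnl v \<le> Istar p sc \<Omega> Cnl w"
    then have "Istar p sc \<Omega> Cnl v \<le> 0" using inV[OF v0(1)] Istar0 by metis
    then have "(\<integral>\<^sup>+ x. ennreal (?Q (v x)) \<partial>?M) = 0" using v by (simp add: Istar_def)
    then have "AE x in ?M. ennreal (?Q (v x)) = 0" using nn_integral_0_iff_AE[OF meas[OF v]] by simp
    then show "AE x in ?M. ?Q (v x) = 0"
      by (rule eventually_mono) (use QA_nonneg[OF p, of sc "v _"] in \<open>auto simp: ennreal_eq_0_iff intro: antisym\<close>)
  next
    assume ae: "AE x in ?M. ?Q (v x) = 0"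
    have "Istar p sc \<Omega> Cnl v = (\<integral>\<^sup>+ x. ennreal (?Q (v x)) \<partial>?M)" using v by (simp add: Istar_def)
    also have "\<dots> = (\<integral>\<^sup>+ x. 0 \<partial>?M)" by (rule nn_integral_cong_AE) (use ae in \<open>auto elim: eventually_mono\<close>)
    finally show "\<forall>w\<in>Vsp p \<Omega>. Istar p sc \<Omega> Cnl v \<le> Istar p sc \<Omega> Cnl w" by simp
  qed
  have part2: "AE x in ?M. snd (v x) = sc (fst (v x))"
    if eq: "{z. z \<in> Ysp \<times> Ysp \<and> ?Q z = 0} = Dset sc" and v: "v \<in> Cnl"
      and ae: "AE x in ?M. ?Q (v x) = 0" for v
  proof -
    have Y: "\<forall>x\<in>\<Omega>. fst (v x) \<in> Ysp \<and> snd (v x) \<in> Ysp" using inV[OF v] by (auto simp: Vsp_def Lsp_def)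
    have "AE x in ?M. x \<in> \<Omega>" using AE_space[of ?M] by simp
    then show ?thesis using ae
    proof (eventually_elim)
      case (elim x)
      then have "v x \<in> {z. z \<in> Ysp \<times> Ysp \<and> ?Q z = 0}" using Y by (auto simp: mem_Times_iff)
      then have "v x \<in> Dset sc" using eq by simp
      then show ?case by (auto simp: Dset_def)
    qed
  qed
  show ?thesis using part1 part2 by blast
qed

end
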